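(* Let $R$ be a Noetherian integral domain of Krull dimension $1$. Then every radical ideal of $R[X]$ is power stable.
   Context: An ideal $I$ of the polynomial ring $R[X]$ over an integral domain $R$ is called power stable if $I^t\cap R = (I\cap R)^t$ for all integers $t\geq 1$. *)

theory Defs
  imports "HOL-Computational_Algebra.Polynomial" "HOL-Library.Extended_Nat"
begin

definition is_ideal :: "'a::comm_ring_1 set \<Rightarrow> bool" where
  "is_ideal I \<longleftrightarrow> 0 \<in> I \<and> (\<forall>x\<in>I. \<forall>y\<in>I. x + y \<in> I) \<and> (\<forall>r x. x \<in> I \<longrightarrow> r * x \<in> I)"

definition ideal_gen :: "'a::comm_ring_1 set \<Rightarrow> 'a set" where
  "ideal_gen S = \<Inter>{I. is_ideal I \<and> S \<subseteq> I}"

definition ideal_mult :: "'a::comm_ring_1 set \<Rightarrow> 'a set \<Rightarrow> 'a set" where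
  "ideal_mult I J = ideal_gen {x * y | x y. x \<in> I \<and> y \<in> J}"

primrec ideal_pow :: "'a::comm_ring_1 set \<Rightarrow> nat \<Rightarrow> 'a set" where
  "ideal_pow I 0 = UNIV"
| "ideal_pow I (Suc n) = ideal_mult (ideal_pow I n) I"

definition prime_ideal :: "'a::comm_ring_1 set \<Rightarrow> bool" where
  "prime_ideal P \<longleftrightarrow> is_ideal P \<and> 1 \<notin> P \<and> (\<forall>x y. x * y \<in> P \<longrightarrow> x \<in> P \<or> y \<in> P)"

definition radical_ideal :: "'a::comm_ring_1 set \<Rightarrow> bool" where
  "radical_ideal I \<longleftrightarrow> is_ideal I \<and> (\<forall>x n. n \<ge> 1 \<longrightarrow> x ^ n \<in> I \<longrightarrow> x \<in> I)"

definition noetherian :: "'a::comm_ring_1 itself \<Rightarrow> bool" where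
  "noetherian _ \<longleftrightarrow> (\<forall>I :: 'a set. is_ideal I \<longrightarrow> (\<exists>S. finite S \<and> I = ideal_gen S))"

definition prime_chain :: "(nat \<Rightarrow> 'a::comm_ring_1 set) \<Rightarrow> nat \<Rightarrow> bool" where
  "prime_chain P n \<longleftrightarrow> (\<forall>i\<le>n. prime_ideal (P i)) \<and> (\<forall>i<n. P i \<subset> P (Suc i))"

definition krull_dim :: "'a::comm_ring_1 itself \<Rightarrow> enat" where
  "krull_dim _ = Sup {enat n | n. \<exists>P :: nat \<Rightarrow> 'a set. prime_chain P n}"

text \<open>Contraction I \<inter> R of an ideal of R[X] to R (R embedded as constant polynomials).\<close>
definition contract :: "'a::comm_ring_1 poly set \<Rightarrow> 'a set" where
  "contract I = {a. [:a:] \<in> I}"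

definition power_stable :: "'a::comm_ring_1 poly set \<Rightarrow> bool" where
  "power_stable I \<longleftrightarrow> (\<forall>t::nat. t \<ge> 1 \<longrightarrow> contract (ideal_pow I t) = ideal_pow (contract I) t)"

end

theory Submission
  imports Defs
begin


lemma ideal_gen_ideal: "is_ideal (ideal_gen S)"
  unfolding ideal_gen_def is_ideal_def by auto

lemma ideal_gen_sub: "S \<subseteq> ideal_gen S"
  unfolding ideal_gen_def by auto

lemma ideal_gen_least: "is_ideal J \<Longrightarrow> S \<subseteq> J \<Longrightarrow> ideal_gen S \<subseteq> J"
  unfolding ideal_gen_def by auto

lemma is_ideal_UNIV: "is_ideal UNIV" unfolding is_ideal_def by auto

lemma ideal_0: "is_ideal I \<Longrightarrow> 0 \<in> I" unfolding is_ideal_def by auto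
lemma ideal_add: "is_ideal I \<Longrightarrow> x \<in> I \<Longrightarrow> y \<in> I \<Longrightarrow> x + y \<in> I" unfolding is_ideal_def by auto
lemma ideal_multL: "is_ideal I \<Longrightarrow> x \<in> I \<Longrightarrow> r * x \<in> I" unfolding is_ideal_def by auto
lemma ideal_multR: "is_ideal I \<Longrightarrow> x \<in> I \<Longrightarrow> x * r \<in> I"
  using ideal_multL[of I x r] by (simp add: mult.commute)
lemma ideal_neg: "is_ideal I \<Longrightarrow> x \<in> I \<Longrightarrow> - x \<in> I"
  using ideal_multL[of I x "-1"] by simp
lemma ideal_diff: "is_ideal I \<Longrightarrow> x \<in> I \<Longrightarrow> y \<in> I \<Longrightarrow> x - y \<in> I"
  using ideal_add[of I x "-y"] ideal_neg[of I y] by simp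
lemma ideal_sum:
  assumes "is_ideal I" "finite A" "\<And>i. i \<in> A \<Longrightarrow> f i \<in> I" shows "sum f A \<in> I"
  using assms(2,3) by (induction A rule: finite_induct) (auto intro: ideal_0[OF assms(1)] ideal_add[OF assms(1)])
lemma ideal_one: "is_ideal I \<Longrightarrow> 1 \<in> I \<Longrightarrow> I = UNIV"
  using ideal_multL[of I 1] by force
lemma ideal_Inter: "(\<And>J. J \<in> F \<Longrightarrow> is_ideal J) \<Longrightarrow> is_ideal (\<Inter>F)"
  unfolding is_ideal_def by auto

lemma ideal_pow_ideal: "is_ideal (ideal_pow I n)"
  by (cases n) (simp_all only: ideal_pow.simps ideal_mult_def ideal_gen_ideal is_ideal_UNIV)

lemma ideal_pow_gen:
  assumes "x \<in> ideal_pow I n" "y \<in> I" shows "x * y \<in> ideal_pow I (Suc n)"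
proof -
  have "x*y \<in> {a*b |a b. a \<in> ideal_pow I n \<and> b \<in> I}" using assms by (intro CollectI exI conjI) (rule refl)
  then have "x*y \<in> ideal_gen {a*b |a b. a \<in> ideal_pow I n \<and> b \<in> I}" by (rule subsetD[OF ideal_gen_sub])
  then show ?thesis unfolding ideal_pow.simps ideal_mult_def .
qed

lemma ideal_pow_Suc_sub:
  assumes "is_ideal J" "\<And>x y. x \<in> ideal_pow I n \<Longrightarrow> y \<in> I \<Longrightarrow> x * y \<in> J"
  shows "ideal_pow I (Suc n) \<subseteq> J"
  unfolding ideal_pow.simps ideal_mult_def
proof (rule ideal_gen_least[OF assms(1)])
  show "{x * y |x y. x \<in> ideal_pow I n \<and> y \<in> I} \<subseteq> J"
  proof
    fix z assume "z \<in> {x * y |x y. x \<in> ideal_pow I n \<and> y \<in> I}"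
    then obtain x y where "z = x * y" "x \<in> ideal_pow I n" "y \<in> I" by blast
    then show "z \<in> J" using assms(2) by simp
  qed
qed

lemma ideal_pow_one: assumes I: "is_ideal I" shows "ideal_pow I 1 = I"
proof
  show "ideal_pow I 1 \<subseteq> I" unfolding One_nat_def by (rule ideal_pow_Suc_sub[OF I]) (rule ideal_multL[OF I])
  show "I \<subseteq> ideal_pow I 1"
  proof
    fix x assume "x \<in> I"
    then have "1 * x \<in> ideal_pow I (Suc 0)" by (intro ideal_pow_gen) auto
    then show "x \<in> ideal_pow I 1" by simp
  qed
qed

lemma ideal_pow_le:
  assumes "is_ideal I" "n \<ge> 1" shows "ideal_pow I n \<subseteq> I"
proof -
  obtain k where k: "n = Suc k" using assms(2) by (cases n) auto
  show ?thesis unfolding k by (rule ideal_pow_Suc_sub[OF assms(1)]) (rule ideal_multL[OF assms(1)])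
qed

lemma ideal_pow_UNIV: "ideal_pow (UNIV::'a::comm_ring_1 set) n = UNIV"
proof (induction n)
  case (Suc n)
  have "1 * 1 \<in> ideal_pow (UNIV::'a set) (Suc n)" by (rule ideal_pow_gen) (simp_all add: Suc.IH)
  then have "1 \<in> ideal_pow (UNIV::'a set) (Suc n)" by simp
  then show ?case by (rule ideal_one[OF ideal_pow_ideal])
qed simp

lemma ideal_pow_0: "is_ideal I \<Longrightarrow> 0 \<in> ideal_pow I n"
  using ideal_0 ideal_pow_ideal by blast

lemma ideal_colon: "is_ideal C \<Longrightarrow> is_ideal {u. \<forall>v\<in>V. u * v \<in> C}"
  unfolding is_ideal_def by (auto simp: distrib_right mult.assoc)

lemma ideal_colon1: "is_ideal C \<Longrightarrow> is_ideal {v. w * v \<in> C}"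
  unfolding is_ideal_def by (auto simp: distrib_left mult.left_commute)

lemma pow_mult_inter:
  assumes A: "is_ideal A" and B: "is_ideal B"
  shows "u \<in> ideal_pow A t \<Longrightarrow> v \<in> ideal_pow B t \<Longrightarrow> u * v \<in> ideal_pow (A \<inter> B) t"
proof (induction t arbitrary: u v)
  case 0 then show ?case by simp
next
  case (Suc t)
  let ?C = "ideal_pow (A \<inter> B) (Suc t)"
  have C: "is_ideal ?C" by (rule ideal_pow_ideal)
  have "ideal_pow A (Suc t) \<subseteq> {u. \<forall>v\<in>ideal_pow B (Suc t). u * v \<in> ?C}"
  proof (rule ideal_pow_Suc_sub[OF ideal_colon[OF C]], safe)
    fix x y v assume x: "x \<in> ideal_pow A t" and y: "y \<in> A" and v: "v \<in> ideal_pow B (Suc t)"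
    have "ideal_pow B (Suc t) \<subseteq> {v. (x * y) * v \<in> ?C}"
    proof (rule ideal_pow_Suc_sub[OF ideal_colon1[OF C]], safe)
      fix x' y' assume x': "x' \<in> ideal_pow B t" and y': "y' \<in> B"
      have "(x * x') * (y * y') \<in> ?C"
        using Suc.IH[OF x x'] y y' A B by (intro ideal_pow_gen) (auto intro: ideal_multL ideal_multR)
      then show "x * y * (x' * y') \<in> ?C" by (simp add: ac_simps)
    qed
    then show "x * y * v \<in> ?C" using v by auto
  qed
  then show ?case using Suc.prems by auto
qed

lemma comax_pow:
  assumes A: "is_ideal A" and B: "is_ideal B" and x: "x \<in> A" and y: "y \<in> B" and xy: "x + y = 1"
  shows "\<exists>x'\<in>A. \<exists>y'\<in>ideal_pow B s. x' + y' = 1"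
proof (induction s)
  case 0
  have "0 \<in> A" "(1::'a) \<in> ideal_pow B 0" "0 + 1 = (1::'a)" using A by (auto intro: ideal_0)
  then show ?case by blast
next
  case (Suc s)
  then obtain x' y' where x': "x' \<in> A" and y': "y' \<in> ideal_pow B s" and e: "x' + y' = 1" by blast
  have "1 = (y' + x') * (y + x)" using e xy by (simp add: add.commute)
  also have "\<dots> = y' * y + (y' * x + x' * y + x' * x)" by (simp add: algebra_simps)
  finally have e2: "y' * y + (y' * x + x' * y + x' * x) = 1" by simp
  have "y' * x + x' * y + x' * x \<in> A" by (intro ideal_add[OF A] ideal_multL[OF A x] ideal_multR[OF A x'])
  moreover have "y' * y \<in> ideal_pow B (Suc s)" using y' y by (rule ideal_pow_gen)
  ultimately show ?case using e2 by (metis add.commute)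
qed

lemma comax_inter:
  assumes A: "is_ideal A" and B: "is_ideal B" and x: "x \<in> A" and y: "y \<in> B" and xy: "x + y = 1"
  shows "ideal_pow A t \<inter> ideal_pow B t \<subseteq> ideal_pow (A \<inter> B) t"
proof
  fix z assume z: "z \<in> ideal_pow A t \<inter> ideal_pow B t"
  obtain y1 x1 where y1: "y1 \<in> B" and x1: "x1 \<in> ideal_pow A t" and e1: "y1 + x1 = 1"
    using comax_pow[OF B A y x] xy by (metis add.commute)
  obtain e e' where e: "e \<in> ideal_pow A t" and e': "e' \<in> ideal_pow B t" and ee: "e + e' = 1"
    using comax_pow[OF ideal_pow_ideal[of A t] B x1 y1] e1 by (metis add.commute)
  have "z = e * z + z * e'" using ee by (metis mult.commute distrib_left mult_1_right)
  moreover have "e * z \<in> ideal_pow (A \<inter> B) t" using pow_mult_inter[OF A B e] z by auto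
  moreover have "z * e' \<in> ideal_pow (A \<inter> B) t" using pow_mult_inter[OF A B _ e'] z by auto
  ultimately show "z \<in> ideal_pow (A \<inter> B) t" using ideal_add[OF ideal_pow_ideal] by metis
qed



definition ideal_rel :: "('a::comm_ring_1 set \<times> 'a set) set" where
  "ideal_rel = {(J', J). is_ideal J \<and> is_ideal J' \<and> J \<subset> J'}"

lemma finite_in_chain:
  assumes mono: "\<And>i j. i \<le> j \<Longrightarrow> f i \<subseteq> f j"
  shows "finite S \<Longrightarrow> S \<subseteq> \<Union>(range f) \<Longrightarrow> \<exists>N. S \<subseteq> f (N::nat)"
proof (induction S rule: finite_induct)
  case empty then show ?case by auto
next
  case (insert x S)
  then obtain N where N: "S \<subseteq> f N" by auto
  obtain i where i: "x \<in> f i" using insert.prems by auto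
  have "insert x S \<subseteq> f (max i N)"
    using N i mono[of i "max i N"] mono[of N "max i N"] by auto
  then show ?case by (rule exI)
qed

lemma noeth_wf:
  assumes N: "noetherian TYPE('a::comm_ring_1)"
  shows "wf (ideal_rel :: ('a set \<times> 'a set) set)"
proof -
  have "\<not> (\<exists>f. \<forall>i. (f (Suc i), f i) \<in> (ideal_rel :: ('a set \<times> 'a set) set))"
  proof
    assume "\<exists>f. \<forall>i. (f (Suc i), f i) \<in> (ideal_rel :: ('a set \<times> 'a set) set)"
    then obtain f :: "nat \<Rightarrow> 'a set" where f: "\<And>i. (f (Suc i), f i) \<in> ideal_rel" by auto
    have id: "\<And>i. is_ideal (f i)" and lt: "\<And>i. f i \<subset> f (Suc i)" using f unfolding ideal_rel_def by auto
    have fmono: "\<And>i j. i \<le> j \<Longrightarrow> f i \<subseteq> f j"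
      by (rule lift_Suc_mono_le[of f]) (use lt in auto)
    let ?U = "\<Union>(range f)"
    have U: "is_ideal ?U"
      unfolding is_ideal_def
    proof (intro conjI ballI allI impI)
      show "0 \<in> ?U" using ideal_0[OF id[of 0]] by auto
    next
      fix x y assume "x \<in> ?U" "y \<in> ?U"
      then obtain i j where "x \<in> f i" "y \<in> f j" by auto
      then have "x \<in> f (max i j)" "y \<in> f (max i j)" using fmono[of i "max i j"] fmono[of j "max i j"] by auto
      then have "x + y \<in> f (max i j)" using ideal_add[OF id] by auto
      then show "x + y \<in> ?U" by auto
    next
      fix r x assume "x \<in> ?U"
      then obtain i where "x \<in> f i" by auto
      then have "r * x \<in> f i" using ideal_multL[OF id] by auto
      then show "r * x \<in> ?U" by auto
    qed
    obtain S where S: "finite S" "?U = ideal_gen S" using N U unfolding noetherian_def by auto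
    have "S \<subseteq> ?U" using S(2) ideal_gen_sub by auto
    then obtain N where SN: "S \<subseteq> f N" using finite_in_chain[of f, OF fmono S(1)] by auto
    have "?U \<subseteq> f N" using S(2) ideal_gen_least[OF id SN] by simp
    moreover have "f (Suc N) \<subseteq> ?U" by auto
    ultimately show False using lt[of N] by auto
  qed
  then show ?thesis by (simp add: wf_iff_no_infinite_down_chain)
qed

definition addp :: "'a::comm_ring_1 set \<Rightarrow> 'a \<Rightarrow> 'a set" where
  "addp M x = {m + r * x | m r. m \<in> M}"

lemma addpI: "m \<in> M \<Longrightarrow> m + r * x \<in> addp M x"
  unfolding addp_def by auto

lemma addpE: assumes "a \<in> addp M x" obtains m r where "a = m + r * x" "m \<in> M"
  using assms unfolding addp_def by auto

lemma addp_ideal: assumes M: "is_ideal M" shows "is_ideal (addp M x)"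
  unfolding is_ideal_def
proof (intro conjI ballI allI impI)
  have "0 + 0 * x \<in> addp M x" by (rule addpI[OF ideal_0[OF M]])
  then show "0 \<in> addp M x" by simp
next
  fix a b assume a0: "a \<in> addp M x" and b0: "b \<in> addp M x"
  obtain m r where a: "a = m + r * x" "m \<in> M" using a0 by (rule addpE)
  obtain m' r' where b: "b = m' + r' * x" "m' \<in> M" using b0 by (rule addpE)
  have "a + b = (m + m') + (r + r') * x" using a b by (simp add: algebra_simps)
  moreover have "(m + m') + (r + r') * x \<in> addp M x" by (rule addpI[OF ideal_add[OF M a(2) b(2)]])
  ultimately show "a + b \<in> addp M x" by simp
next
  fix s a assume a0: "a \<in> addp M x"
  obtain m r where a: "a = m + r * x" "m \<in> M" using a0 by (rule addpE)
  have "s * a = s * m + (s * r) * x" using a by (simp add: algebra_simps)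
  moreover have "s * m + (s * r) * x \<in> addp M x" by (rule addpI[OF ideal_multL[OF M a(2)]])
  ultimately show "s * a \<in> addp M x" by simp
qed

lemma addp_sub: "M \<subseteq> addp M x"
proof
  fix m assume "m \<in> M"
  then have "m + 0 * x \<in> addp M x" by (rule addpI)
  then show "m \<in> addp M x" by simp
qed

lemma addp_mem: "is_ideal M \<Longrightarrow> x \<in> addp M x"
proof -
  assume M: "is_ideal M"
  have "0 + 1 * x \<in> addp M x" by (rule addpI[OF ideal_0[OF M]])
  then show ?thesis by simp
qed

lemma exists_prime:
  assumes N: "noetherian TYPE('a::comm_ring_1)" and K: "is_ideal (K::'a set)" and one: "1 \<notin> K"
  shows "\<exists>M. prime_ideal M \<and> K \<subseteq> M"
proof -
  let ?Q = "{L. is_ideal L \<and> K \<subseteq> L \<and> 1 \<notin> L}"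
  have "K \<in> ?Q" using K one by auto
  then obtain M where M: "M \<in> ?Q" and min: "\<And>L. (L, M) \<in> ideal_rel \<Longrightarrow> L \<notin> ?Q"
    by (rule wfE_min[OF noeth_wf[OF N]]) (rule that)
  have Mi: "is_ideal M" and KM: "K \<subseteq> M" and oM: "1 \<notin> M" using M by auto
  have ext: "1 \<in> addp M x" if x: "x \<notin> M" for x
  proof -
    have "M \<subset> addp M x" using addp_sub[of M x] addp_mem[OF Mi, of x] x by auto
    then have "(addp M x, M) \<in> ideal_rel" unfolding ideal_rel_def using addp_ideal[OF Mi] Mi by auto
    then have "addp M x \<notin> ?Q" by (rule min)
    then show "1 \<in> addp M x" using addp_ideal[OF Mi] addp_sub[of M x] KM by auto
  qed
  have "prime_ideal M" unfolding prime_ideal_def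
  proof (intro conjI allI impI Mi oM)
    fix x y assume xy: "x * y \<in> M"
    show "x \<in> M \<or> y \<in> M"
    proof (rule ccontr)
      assume "\<not> (x \<in> M \<or> y \<in> M)"
      then have x: "x \<notin> M" and y: "y \<notin> M" by auto
      obtain m r where e1: "1 = m + r * x" and m: "m \<in> M" using ext[OF x] by (rule addpE) auto
      obtain m' s where e2: "1 = m' + s * y" and m': "m' \<in> M" using ext[OF y] by (rule addpE) auto
      have "(m + r * x) * (m' + s * y) = (1::'a)" by (simp only: e1[symmetric] e2[symmetric] mult_1_left)
      then have "(1::'a) = (m + r * x) * (m' + s * y)" by simp
      also have "\<dots> = m * (m' + s * y) + r * (x * m') + (r * s) * (x * y)" by (simp add: algebra_simps)
      finally have e: "(1::'a) = m * (m' + s * y) + r * (x * m') + (r * s) * (x * y)" .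
      have "m * (m' + s * y) + r * (x * m') + (r * s) * (x * y) \<in> M"
        by (intro ideal_add[OF Mi] ideal_multR[OF Mi m] ideal_multL[OF Mi] ideal_multL[OF Mi m'] xy)
      then show False using oM e by simp
    qed
  qed
  then show ?thesis using KM by blast
qed

definition rad :: "'a::comm_ring_1 set \<Rightarrow> 'a set" where
  "rad J = {z. \<exists>n\<ge>1. z ^ n \<in> J}"

lemma pow_mem: assumes J: "is_ideal J" and z: "z ^ n \<in> J" and nm: "n \<le> m" shows "z ^ m \<in> J"
proof -
  have "z ^ m = z ^ (m - n) * z ^ n" using nm by (simp add: power_add[symmetric])
  then show ?thesis using ideal_multL[OF J z] by simp
qed

lemma rad_ideal: assumes J: "is_ideal J" shows "is_ideal (rad J)"
  unfolding is_ideal_def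
proof (intro conjI ballI allI impI)
  show "0 \<in> rad J" unfolding rad_def using ideal_0[OF J] by (intro CollectI exI[of _ 1]) simp
next
  fix x y assume "x \<in> rad J" "y \<in> rad J"
  then obtain a b where a: "a \<ge> 1" "x ^ a \<in> J" and b: "b \<ge> 1" "y ^ b \<in> J" unfolding rad_def by blast
  have "(x + y) ^ (a + b) = (\<Sum>k\<le>a+b. of_nat ((a+b) choose k) * x ^ k * y ^ (a + b - k))"
    by (rule binomial_ring)
  also have "\<dots> \<in> J"
  proof (rule ideal_sum[OF J], simp, goal_cases)
    case (1 k)
    show ?case
    proof (cases "a \<le> k")
      case True
      then have "x ^ k \<in> J" using pow_mem[OF J a(2)] by blast
      then have "(of_nat ((a+b) choose k) * y ^ (a + b - k)) * x ^ k \<in> J" by (rule ideal_multL[OF J])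
      then show ?thesis by (simp add: ac_simps)
    next
      case False
      then have "y ^ (a + b - k) \<in> J" using pow_mem[OF J b(2)] by simp
      then have "(of_nat ((a+b) choose k) * x ^ k) * y ^ (a + b - k) \<in> J" by (rule ideal_multL[OF J])
      then show ?thesis by (simp add: ac_simps)
    qed
  qed
  finally show "x + y \<in> rad J" unfolding rad_def using a(1) by (intro CollectI exI[of _ "a+b"]) simp
next
  fix r x assume "x \<in> rad J"
  then obtain a where a: "a \<ge> 1" "x ^ a \<in> J" unfolding rad_def by blast
  have "(r * x) ^ a = r ^ a * x ^ a" by (simp add: power_mult_distrib)
  then have "(r * x) ^ a \<in> J" using ideal_multL[OF J a(2)] by simp
  then show "r * x \<in> rad J" unfolding rad_def using a(1) by blast
qed

lemma rad_sub: "J \<subseteq> rad J"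
proof
  fix z assume "z \<in> J" then show "z \<in> rad J" unfolding rad_def by (intro CollectI exI[of _ 1]) simp
qed

lemma rad_mono: "J \<subseteq> J' \<Longrightarrow> rad J \<subseteq> rad J'"
  unfolding rad_def by blast

lemma decomp:
  assumes N: "noetherian TYPE('a::comm_ring_1)" and J: "is_ideal (J::'a set)"
  shows "\<exists>F. finite F \<and> (\<forall>P\<in>F. prime_ideal P) \<and> rad J = \<Inter>F"
  using noeth_wf[OF N] J
proof (induction J rule: wf_induct_rule)
  case (less J)
  note J = less.prems
  show ?case
  proof (cases "1 \<in> J")
    case True
    have "rad J = UNIV" using rad_sub[of J] ideal_one[OF J True] by auto
    then show ?thesis by (intro exI[of _ "{}"]) simp
  next
    case one: False
    show ?thesis
    proof (cases "prime_ideal (rad J)")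
      case True
      then show ?thesis by (intro exI[of _ "{rad J}"]) simp
    next
      case False
      have o: "1 \<notin> rad J" using one unfolding rad_def by simp
      obtain x y where xy: "x * y \<in> rad J" and x: "x \<notin> rad J" and y: "y \<notin> rad J"
        using False rad_ideal[OF J] o unfolding prime_ideal_def by blast
      obtain n where n: "n \<ge> 1" "(x * y) ^ n \<in> J" using xy unfolding rad_def by blast
      have xn: "x ^ n \<notin> J" using x n(1) unfolding rad_def by blast
      have yn: "y ^ n \<notin> J" using y n(1) unfolding rad_def by blast
      have r1: "(addp J (x ^ n), J) \<in> ideal_rel"
        unfolding ideal_rel_def using addp_ideal[OF J] addp_sub[of J] addp_mem[OF J] J xn by blast
      have r2: "(addp J (y ^ n), J) \<in> ideal_rel"
        unfolding ideal_rel_def using addp_ideal[OF J] addp_sub[of J] addp_mem[OF J] J yn by blast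
      obtain F1 where F1: "finite F1" "\<forall>P\<in>F1. prime_ideal P" "rad (addp J (x ^ n)) = \<Inter>F1"
        using less.IH[OF r1 addp_ideal[OF J]] by blast
      obtain F2 where F2: "finite F2" "\<forall>P\<in>F2. prime_ideal P" "rad (addp J (y ^ n)) = \<Inter>F2"
        using less.IH[OF r2 addp_ideal[OF J]] by blast
      have "rad J = rad (addp J (x ^ n)) \<inter> rad (addp J (y ^ n))"
      proof
        show "rad J \<subseteq> rad (addp J (x ^ n)) \<inter> rad (addp J (y ^ n))"
          using rad_mono[OF addp_sub] by blast
      next
        show "rad (addp J (x ^ n)) \<inter> rad (addp J (y ^ n)) \<subseteq> rad J"
        proof
          fix z assume "z \<in> rad (addp J (x ^ n)) \<inter> rad (addp J (y ^ n))"
          then obtain a b where a: "a \<ge> 1" "z ^ a \<in> addp J (x ^ n)" and b: "b \<ge> 1" "z ^ b \<in> addp J (y ^ n)"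
            unfolding rad_def by blast
          obtain j r where ja: "z ^ a = j + r * x ^ n" "j \<in> J" using a(2) unfolding addp_def by blast
          obtain j' s where jb: "z ^ b = j' + s * y ^ n" "j' \<in> J" using b(2) unfolding addp_def by blast
          have "z ^ (a + b) = (j + r * x ^ n) * (j' + s * y ^ n)" using ja jb by (simp add: power_add)
          also have "\<dots> = j * (j' + s * y ^ n) + (r * x ^ n) * j' + (r * s) * (x * y) ^ n"
            by (simp add: algebra_simps power_mult_distrib)
          finally have e: "z ^ (a + b) = j * (j' + s * y ^ n) + (r * x ^ n) * j' + (r * s) * (x * y) ^ n" .
          have "j * (j' + s * y ^ n) + (r * x ^ n) * j' + (r * s) * (x * y) ^ n \<in> J"
            by (intro ideal_add[OF J] ideal_multR[OF J ja(2)] ideal_multL[OF J jb(2)] ideal_multL[OF J n(2)])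
          then show "z \<in> rad J" unfolding rad_def using e a(1) by (intro CollectI exI[of _ "a+b"]) simp
        qed
      qed
      then have "rad J = \<Inter>(F1 \<union> F2)" using F1(3) F2(3) by (simp add: Inter_Un_distrib)
      then show ?thesis using F1 F2 by (intro exI[of _ "F1 \<union> F2"]) auto
    qed
  qed
qed

definition maxl :: "'a::comm_ring_1 set \<Rightarrow> bool" where
  "maxl m \<longleftrightarrow> prime_ideal m \<and> (\<forall>c. c \<notin> m \<longrightarrow> (\<exists>u. u * c - 1 \<in> m))"

lemma zero_prime: "prime_ideal {0::'a::idom}"
  unfolding prime_ideal_def is_ideal_def by auto

lemma dim_maxl:
  assumes N: "noetherian TYPE('a::idom)" and D: "krull_dim TYPE('a) = 1"
    and m: "prime_ideal (m::'a set)" and nz: "m \<noteq> {0}"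
  shows "maxl m"
proof -
  have mi: "is_ideal m" using m unfolding prime_ideal_def by blast
  have "\<exists>u. u * c - 1 \<in> m" if c: "c \<notin> m" for c
  proof (rule ccontr)
    assume nu: "\<not> (\<exists>u. u * c - 1 \<in> m)"
    have "1 \<notin> addp m c"
    proof
      assume "1 \<in> addp m c"
      then obtain x r where e: "1 = x + r * c" and x: "x \<in> m" unfolding addp_def by blast
      have "r * c - 1 = r * c - (x + r * c)" by (simp only: e[symmetric])
      then have "r * c - 1 = - x" by simp
      then have "r * c - 1 \<in> m" using ideal_neg[OF mi x] by simp
      with nu show False by blast
    qed
    then obtain M where M: "prime_ideal M" "addp m c \<subseteq> M" using exists_prime[OF N addp_ideal[OF mi]] by blast
    define P where "P = (\<lambda>i::nat. if i = 0 then {0::'a} else if i = 1 then m else M)"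
    have "prime_chain P 2"
      unfolding prime_chain_def
    proof (intro conjI allI impI)
      fix i :: nat assume "i \<le> 2"
      then show "prime_ideal (P i)" using zero_prime m M(1) unfolding P_def by auto
    next
      fix i :: nat assume i: "i < 2"
      have z: "{0} \<subset> m" using ideal_0[OF mi] nz by auto
      have mM: "m \<subset> M" using addp_sub[of m c] addp_mem[OF mi, of c] M(2) c by blast
      show "P i \<subset> P (Suc i)"
      proof (cases "i = 0")
        case True then show ?thesis using z unfolding P_def by simp
      next
        case False then have "i = 1" using i by simp
        then show ?thesis using mM unfolding P_def by simp
      qed
    qed
    then have "enat 2 \<in> {enat n | n. \<exists>P :: nat \<Rightarrow> 'a set. prime_chain P n}" by blast
    then have "enat 2 \<le> krull_dim TYPE('a)" unfolding krull_dim_def by (rule Sup_upper)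
    then show False using D by (simp add: one_enat_def)
  qed
  then show ?thesis unfolding maxl_def using m by blast
qed

lemma avoid:
  assumes m: "prime_ideal m" and G: "finite G"
    and H: "\<And>m'. m' \<in> G \<Longrightarrow> is_ideal m' \<and> (\<exists>x\<in>m'. x \<notin> m)"
  shows "\<exists>b. b \<notin> m \<and> (\<forall>m'\<in>G. b \<in> m')"
  using G H
proof (induction G rule: finite_induct)
  case empty
  have "1 \<notin> m" using m unfolding prime_ideal_def by simp
  then show ?case by (intro exI[of _ 1]) simp
next
  case (insert m0 G)
  have HG: "\<And>m'. m' \<in> G \<Longrightarrow> is_ideal m' \<and> (\<exists>x\<in>m'. x \<notin> m)" using insert.prems by simp
  obtain b where b: "b \<notin> m" "\<forall>m'\<in>G. b \<in> m'" using insert.IH[OF HG] by auto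
  have H0: "is_ideal m0 \<and> (\<exists>x\<in>m0. x \<notin> m)" using insert.prems[of m0] by simp
  then obtain x where x: "x \<in> m0" "x \<notin> m" by auto
  have m0: "is_ideal m0" using H0 by simp
  have "b * x \<notin> m"
  proof
    assume "b * x \<in> m"
    then have "b \<in> m \<or> x \<in> m" using m unfolding prime_ideal_def by simp
    then show False using b(1) x(2) by simp
  qed
  moreover have "b * x \<in> m0" by (rule ideal_multL[OF m0 x(1)])
  moreover have "\<forall>m'\<in>G. b * x \<in> m'"
  proof
    fix m' assume m': "m' \<in> G"
    have "is_ideal m'" using HG[OF m'] by simp
    moreover have "b \<in> m'" using b(2) m' by simp
    ultimately show "b * x \<in> m'" by (rule ideal_multR)
  qed
  ultimately show ?case by (intro exI[of _ "b * x"]) simp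
qed

lemma maxl_distinct:
  assumes m: "maxl m" and m': "maxl m'" and ne: "m \<noteq> m'"
  shows "\<exists>x\<in>m'. x \<notin> m"
proof (rule ccontr)
  assume "\<not> (\<exists>x\<in>m'. x \<notin> m)"
  then have sub: "m' \<subseteq> m" by auto
  then have "\<not> m \<subseteq> m'" using ne by auto
  then obtain c where c: "c \<in> m" "c \<notin> m'" by auto
  obtain u where u: "u * c - 1 \<in> m'" using m' c(2) unfolding maxl_def by auto
  have mi: "is_ideal m" and o: "1 \<notin> m" using m unfolding maxl_def prime_ideal_def by auto
  have "u * c - 1 \<in> m" using u sub by auto
  then have "u * c - (u * c - 1) \<in> m" by (rule ideal_diff[OF mi ideal_multL[OF mi c(1)]])
  then show False using o by simp
qed

lemma maxl_ideal: "maxl m \<Longrightarrow> is_ideal m" unfolding maxl_def prime_ideal_def by blast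

lemma inter_pow:
  assumes "finite F" "\<And>m. m \<in> F \<Longrightarrow> maxl m"
  shows "(\<Inter>m\<in>F. ideal_pow m t) \<subseteq> ideal_pow (\<Inter>F) t"
  using assms
proof (induction F rule: finite_induct)
  case empty then show ?case by (simp add: ideal_pow_UNIV)
next
  case (insert m G)
  have mm: "maxl m" using insert.prems by simp
  have GG: "\<And>m'. m' \<in> G \<Longrightarrow> maxl m'" using insert.prems by simp
  have "\<exists>b. b \<notin> m \<and> (\<forall>m'\<in>G. b \<in> m')"
  proof (rule avoid)
    show "prime_ideal m" using mm unfolding maxl_def by simp
    show "finite G" by (rule insert.hyps)
    fix m' assume m': "m' \<in> G"
    then have "m \<noteq> m'" using insert.hyps by auto
    then have "\<exists>x\<in>m'. x \<notin> m" by (rule maxl_distinct[OF mm GG[OF m']])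
    then show "is_ideal m' \<and> (\<exists>x\<in>m'. x \<notin> m)" using maxl_ideal[OF GG[OF m']] by simp
  qed
  then obtain b where b: "b \<notin> m" "\<forall>m'\<in>G. b \<in> m'" by auto
  obtain u where u: "u * b - 1 \<in> m" using mm b(1) unfolding maxl_def by auto
  have mi: "is_ideal m" by (rule maxl_ideal[OF mm])
  have Bi: "is_ideal (\<Inter>G)" by (rule ideal_Inter) (rule maxl_ideal[OF GG])
  have a: "- (u * b - 1) \<in> m" by (rule ideal_neg[OF mi u])
  have bb: "u * b \<in> \<Inter>G"
  proof
    fix m' assume m': "m' \<in> G"
    show "u * b \<in> m'" using b(2) m' by (intro ideal_multL[OF maxl_ideal[OF GG[OF m']]]) simp
  qed
  have s: "- (u * b - 1) + u * b = 1" by simp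
  have IH: "(\<Inter>m'\<in>G. ideal_pow m' t) \<subseteq> ideal_pow (\<Inter>G) t" by (rule insert.IH[OF GG])
  have "(\<Inter>m'\<in>insert m G. ideal_pow m' t) = ideal_pow m t \<inter> (\<Inter>m'\<in>G. ideal_pow m' t)" by simp
  also have "\<dots> \<subseteq> ideal_pow m t \<inter> ideal_pow (\<Inter>G) t" using IH by auto
  also have "\<dots> \<subseteq> ideal_pow (m \<inter> \<Inter>G) t" by (rule comax_inter[OF mi Bi a bb s])
  finally show ?case by simp
qed



definition PA :: "'a::comm_ring_1 set \<Rightarrow> 'a poly set" where
  "PA A = {q. \<forall>i. coeff q i \<in> A}"

definition NA :: "'a::comm_ring_1 set \<Rightarrow> 'a poly \<Rightarrow> 'a poly set" where
  "NA A f = {q + f * h | q h. q \<in> PA A}"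

lemma PA_I: "(\<And>i. coeff q i \<in> A) \<Longrightarrow> q \<in> PA A" unfolding PA_def by simp
lemma PA_D: "q \<in> PA A \<Longrightarrow> coeff q i \<in> A" unfolding PA_def by simp

lemma PA_add: "is_ideal A \<Longrightarrow> q \<in> PA A \<Longrightarrow> q' \<in> PA A \<Longrightarrow> q + q' \<in> PA A"
  by (rule PA_I) (simp add: ideal_add PA_D)
lemma PA_diff: "is_ideal A \<Longrightarrow> q \<in> PA A \<Longrightarrow> q' \<in> PA A \<Longrightarrow> q - q' \<in> PA A"
  by (rule PA_I) (simp add: ideal_diff PA_D)
lemma PA_0: "is_ideal A \<Longrightarrow> 0 \<in> PA A"
  by (rule PA_I) (simp add: ideal_0)
lemma PA_smult: "is_ideal A \<Longrightarrow> c \<in> A \<Longrightarrow> smult c g \<in> PA A"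
  by (rule PA_I) (simp add: ideal_multR)
lemma PA_smult2: "is_ideal A \<Longrightarrow> q \<in> PA A \<Longrightarrow> smult c q \<in> PA A"
  by (rule PA_I) (simp add: ideal_multL PA_D)
lemma PA_monom: "is_ideal A \<Longrightarrow> c \<in> A \<Longrightarrow> monom c n \<in> PA A"
  by (rule PA_I) (simp add: ideal_0)
lemma PA_UNIV: "PA UNIV = UNIV" unfolding PA_def by simp

lemma PA_multL: assumes A: "is_ideal A" and q: "q \<in> PA A" shows "r * q \<in> PA A"
proof (rule PA_I)
  fix n
  show "coeff (r * q) n \<in> A" unfolding coeff_mult
    by (rule ideal_sum[OF A]) (simp_all add: ideal_multL[OF A] PA_D[OF q])
qed

lemma PA_mult: assumes q: "q \<in> PA (ideal_pow A s)" and q': "q' \<in> PA A"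
  shows "q * q' \<in> PA (ideal_pow A (Suc s))"
proof (rule PA_I)
  fix n
  show "coeff (q * q') n \<in> ideal_pow A (Suc s)" unfolding coeff_mult
    by (rule ideal_sum[OF ideal_pow_ideal], simp, rule ideal_pow_gen[OF PA_D[OF q] PA_D[OF q']])
qed

lemma NAI: "q \<in> PA A \<Longrightarrow> q + f * h \<in> NA A f" unfolding NA_def by blast
lemma NAE: assumes "x \<in> NA A f" obtains q h where "x = q + f * h" "q \<in> PA A"
  using assms unfolding NA_def by auto

lemma NA_ideal: assumes A: "is_ideal A" shows "is_ideal (NA A f)"
  unfolding is_ideal_def
proof (intro conjI ballI allI impI)
  have "0 + f * 0 \<in> NA A f" by (rule NAI[OF PA_0[OF A]])
  then show "0 \<in> NA A f" by simp
next
  fix x y assume x0: "x \<in> NA A f" and y0: "y \<in> NA A f"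
  obtain q h where x: "x = q + f * h" "q \<in> PA A" using x0 by (rule NAE)
  obtain q' h' where y: "y = q' + f * h'" "q' \<in> PA A" using y0 by (rule NAE)
  have "x + y = (q + q') + f * (h + h')" using x y by (simp add: algebra_simps)
  moreover have "(q + q') + f * (h + h') \<in> NA A f" by (rule NAI[OF PA_add[OF A x(2) y(2)]])
  ultimately show "x + y \<in> NA A f" by simp
next
  fix r x assume x0: "x \<in> NA A f"
  obtain q h where x: "x = q + f * h" "q \<in> PA A" using x0 by (rule NAE)
  have "r * x = r * q + f * (r * h)" using x by (simp add: algebra_simps)
  moreover have "r * q + f * (r * h) \<in> NA A f" by (rule NAI[OF PA_multL[OF A x(2)]])
  ultimately show "r * x \<in> NA A f" by simp
qed

lemma pow_NA:
  assumes A: "is_ideal A" and I: "I \<subseteq> NA A f"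
  shows "ideal_pow I s \<subseteq> NA (ideal_pow A s) f"
proof (induction s)
  case 0
  show ?case
  proof
    fix x :: "'a poly"
    have "x + f * 0 \<in> NA (ideal_pow A 0) f" by (rule NAI) (simp add: PA_UNIV)
    then show "x \<in> NA (ideal_pow A 0) f" by simp
  qed
next
  case (Suc s)
  show ?case
  proof (rule ideal_pow_Suc_sub[OF NA_ideal[OF ideal_pow_ideal]])
    fix x y assume x0: "x \<in> ideal_pow I s" and y0: "y \<in> I"
    have "x \<in> NA (ideal_pow A s) f" using Suc.IH x0 by auto
    then obtain q h where x: "x = q + f * h" "q \<in> PA (ideal_pow A s)" by (rule NAE)
    have "y \<in> NA A f" using I y0 by auto
    then obtain q' h' where y: "y = q' + f * h'" "q' \<in> PA A" by (rule NAE)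
    have "x * y = q * q' + f * (q * h' + h * q' + h * f * h')" using x y by (simp add: algebra_simps)
    moreover have "q * q' + f * (q * h' + h * q' + h * f * h') \<in> NA (ideal_pow A (Suc s)) f"
      by (rule NAI[OF PA_mult[OF x(2) y(2)]])
    ultimately show "x * y \<in> NA (ideal_pow A (Suc s)) f" by simp
  qed
qed

lemma deg_less: "degree (g::'a::zero poly) \<le> n \<Longrightarrow> coeff g n = 0 \<Longrightarrow> 0 < n \<Longrightarrow> degree g < n"
  by (metis le_neq_implies_less leading_coeff_0_iff degree_0)

lemma retract_aux:
  assumes A: "is_ideal A" and f1: "lead_coeff f = 1" and fd: "degree f \<ge> 1"
  shows "\<forall>q. [:a:] = q + f * h \<longrightarrow> q \<in> PA A \<longrightarrow> a \<in> A"
proof (induction "degree h" arbitrary: h rule: less_induct)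
  case less
  show ?case
  proof (intro allI impI)
    fix q assume e: "[:a:] = q + f * h" and q: "q \<in> PA A"
    show "a \<in> A"
    proof (cases "h = 0")
      case True
      then have "a = coeff q 0" using e by (metis add.right_neutral coeff_pCons_0 mult_zero_right)
      then show ?thesis using PA_D[OF q] by simp
    next
      case hn: False
      let ?n = "degree f + degree h"
      have fn: "f \<noteq> 0" using f1 by auto
      have "coeff (f * h) ?n = lead_coeff h" using coeff_mult_degree_sum[of f h] f1 by simp
      moreover have "coeff [:a:] ?n = 0" using fd by (simp add: coeff_pCons split: nat.split)
      ultimately have "0 = coeff q ?n + lead_coeff h" using e by (metis coeff_add)
      then have lh: "lead_coeff h = - coeff q ?n" by (simp add: eq_neg_iff_add_eq_0 add.commute)
      have lhA: "lead_coeff h \<in> A" unfolding lh by (rule ideal_neg[OF A PA_D[OF q]])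
      define h' where "h' = h - monom (lead_coeff h) (degree h)"
      define q' where "q' = q + smult (lead_coeff h) (f * monom 1 (degree h))"
      have "f * monom (lead_coeff h) (degree h) = smult (lead_coeff h) (f * monom 1 (degree h))"
        by (metis mult_smult_right smult_monom mult_1_right)
      then have e': "[:a:] = q' + f * h'" unfolding q'_def h'_def using e by (simp add: algebra_simps)
      have q': "q' \<in> PA A" unfolding q'_def by (rule PA_add[OF A q PA_smult[OF A lhA]])
      show ?thesis
      proof (cases "h' = 0")
        case True
        then have "a = coeff q' 0" using e' by (metis add.right_neutral coeff_pCons_0 mult_zero_right)
        then show ?thesis using PA_D[OF q'] by simp
      next
        case False
        have dle: "degree h' \<le> degree h" unfolding h'_def by (rule degree_diff_le) (auto intro: degree_monom_le)
        have c0: "coeff h' (degree h) = 0" unfolding h'_def by simp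
        have "degree h' \<noteq> degree h" using False c0 by (metis leading_coeff_0_iff)
        then have "degree h' < degree h" using dle by simp
        then show ?thesis using less[of h'] e' q' by blast
      qed
    qed
  qed
qed

lemma retract:
  assumes "is_ideal A" "lead_coeff f = 1" "degree f \<ge> 1" "[:a:] = q + f * h" "q \<in> PA A"
  shows "a \<in> A"
  using retract_aux[OF assms(1-3), of a h] assms(4,5) by blast



lemma reduce_aux:
  assumes K: "is_ideal K" and PK: "PA m \<subseteq> K" and mi: "is_ideal m"
    and f1: "lead_coeff f = 1" and fd: "degree f \<ge> 1"
    and H: "\<And>k. k \<in> K \<Longrightarrow> lead_coeff k \<notin> m \<Longrightarrow> degree f \<le> degree k \<and> f \<in> K"
  shows "k \<in> K \<longrightarrow> k \<in> NA m f"
proof (induction "degree k" arbitrary: k rule: less_induct)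
  case less
  show ?case
  proof
    assume k: "k \<in> K"
    show "k \<in> NA m f"
    proof (cases "lead_coeff k \<in> m")
      case True
      show ?thesis
      proof (cases "degree k = 0")
        case True
        have "k \<in> PA m"
        proof (rule PA_I)
          fix i show "coeff k i \<in> m"
          proof (cases "i = 0")
            case True then show ?thesis using \<open>lead_coeff k \<in> m\<close> \<open>degree k = 0\<close> by simp
          next
            case False then show ?thesis using \<open>degree k = 0\<close> ideal_0[OF mi] by (simp add: coeff_eq_0)
          qed
        qed
        then have "k + f * 0 \<in> NA m f" by (rule NAI)
        then show ?thesis by simp
      next
        case dpos: False
        define k' where "k' = k - monom (lead_coeff k) (degree k)"
        have mon: "monom (lead_coeff k) (degree k) \<in> K" using PK PA_monom[OF mi True] by blast
        have k'K: "k' \<in> K" unfolding k'_def by (rule ideal_diff[OF K k mon])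
        have "degree k' < degree k"
          by (rule deg_less) (use dpos in \<open>auto simp: k'_def intro!: degree_diff_le degree_monom_le\<close>)
        then have "k' \<in> NA m f" using less k'K by blast
        then obtain q h where qh: "k' = q + f * h" "q \<in> PA m" by (rule NAE)
        have "k = (q + monom (lead_coeff k) (degree k)) + f * h" using qh(1) unfolding k'_def
          by (simp add: algebra_simps)
        moreover have "(q + monom (lead_coeff k) (degree k)) + f * h \<in> NA m f"
          by (rule NAI[OF PA_add[OF mi qh(2) PA_monom[OF mi True]]])
        ultimately show ?thesis by simp
      qed
    next
      case False
      have df: "degree f \<le> degree k" and fK: "f \<in> K" using H[OF k False] by auto
      let ?e = "degree k - degree f"
      define g where "g = smult (lead_coeff k) (monom 1 ?e * f)"
      define k' where "k' = k - g"
      have gK: "g \<in> K" unfolding g_def using ideal_multL[OF K fK, of "[:lead_coeff k:] * monom 1 ?e"]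
        by (simp add: ac_simps)
      have k'K: "k' \<in> K" unfolding k'_def by (rule ideal_diff[OF K k gK])
      have dg: "degree g \<le> degree k" unfolding g_def
        by (rule order.trans[OF degree_smult_le], rule order.trans[OF degree_mult_le])
           (use df degree_monom_le[of "1::'a" ?e] in simp)
      have cg: "coeff g (degree k) = lead_coeff k"
      proof -
        have "coeff (monom 1 ?e * f) (degree k) = coeff f (degree k - ?e)"
          by (simp add: coeff_monom_mult)
        also have "degree k - ?e = degree f" using df by simp
        finally show ?thesis unfolding g_def using f1 by simp
      qed
      have "degree k' < degree k"
        by (rule deg_less) (use df fd dg cg in \<open>auto simp: k'_def intro!: degree_diff_le\<close>)
      then have "k' \<in> NA m f" using less k'K by blast
      then obtain q h where qh: "k' = q + f * h" "q \<in> PA m" by (rule NAE)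
      have "g = f * smult (lead_coeff k) (monom 1 ?e)" unfolding g_def by (simp add: ac_simps)
      then have "k = q + f * (h + smult (lead_coeff k) (monom 1 ?e))" using qh(1) unfolding k'_def
        by (simp add: algebra_simps)
      moreover have "q + f * (h + smult (lead_coeff k) (monom 1 ?e)) \<in> NA m f" by (rule NAI[OF qh(2)])
      ultimately show ?thesis by simp
    qed
  qed
qed

lemma monic_exists:
  assumes mm: "maxl m" and I: "is_ideal (I :: 'a::comm_ring_1 poly set)"
    and pI: "\<And>q. q \<in> PA p \<Longrightarrow> q \<in> I" and pid: "is_ideal p" and pm: "p \<subseteq> m"
    and contr: "\<And>c. [:c:] \<in> I \<Longrightarrow> c \<in> p"
    and b: "b \<notin> m" and bm: "\<And>x. x \<in> m \<Longrightarrow> b * x \<in> p"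
  shows "\<exists>f. lead_coeff f = 1 \<and> degree f \<ge> 1 \<and> I \<subseteq> NA m f"
proof -
  have mi: "is_ideal m" by (rule maxl_ideal[OF mm])
  define K where "K = {g + q | g q. g \<in> I \<and> q \<in> PA m}"
  have KI: "g + q \<in> K" if "g \<in> I" "q \<in> PA m" for g q unfolding K_def using that by blast
  have KE: "\<exists>g q. k = g + q \<and> g \<in> I \<and> q \<in> PA m" if "k \<in> K" for k using that unfolding K_def by blast
  have Ki: "is_ideal K"
    unfolding is_ideal_def
  proof (intro conjI ballI allI impI)
    show "0 \<in> K" using KI[OF ideal_0[OF I] PA_0[OF mi]] by simp
  next
    fix x y assume "x \<in> K" "y \<in> K"
    then obtain g q g' q' where x: "x = g + q" "g \<in> I" "q \<in> PA m" and y: "y = g' + q'" "g' \<in> I" "q' \<in> PA m"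
      using KE by metis
    have "x + y = (g + g') + (q + q')" using x y by (simp add: algebra_simps)
    then show "x + y \<in> K" using KI[OF ideal_add[OF I x(2) y(2)] PA_add[OF mi x(3) y(3)]] by simp
  next
    fix r x assume "x \<in> K"
    then obtain g q where x: "x = g + q" "g \<in> I" "q \<in> PA m" using KE by metis
    have "r * x = r * g + r * q" using x by (simp add: algebra_simps)
    then show "r * x \<in> K" using KI[OF ideal_multL[OF I x(2)] PA_multL[OF mi x(3)]] by simp
  qed
  have IK: "I \<subseteq> K"
  proof
    fix g assume "g \<in> I" then show "g \<in> K" using KI[OF _ PA_0[OF mi], of g] by simp
  qed
  have PK: "PA m \<subseteq> K"
  proof
    fix q assume "q \<in> PA m" then show "q \<in> K" using KI[OF ideal_0[OF I], of q] by simp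
  qed
  define D where "D = {n. \<exists>k\<in>K. degree k = n \<and> lead_coeff k \<notin> m}"
  show ?thesis
  proof (cases "D = {}")
    case True
    let ?f = "monom (1::'a) 1"
    have f1: "lead_coeff ?f = 1" and fd: "degree ?f \<ge> 1" by (simp_all add: degree_monom_eq)
    have "\<forall>k. k \<in> K \<longrightarrow> k \<in> NA m ?f"
    proof (intro allI, rule reduce_aux[OF Ki PK mi f1 fd])
      fix k assume "k \<in> K" "lead_coeff k \<notin> m"
      then have "degree k \<in> D" unfolding D_def by blast
      then show "degree ?f \<le> degree k \<and> ?f \<in> K" using True by simp
    qed
    then show ?thesis using f1 fd IK by blast
  next
    case False
    define d where "d = (LEAST n. n \<in> D)"
    have "d \<in> D" unfolding d_def using False by (metis LeastI ex_in_conv)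
    then obtain k0 where k0: "k0 \<in> K" "degree k0 = d" "lead_coeff k0 \<notin> m" unfolding D_def by blast
    obtain u where u: "u * lead_coeff k0 - 1 \<in> m" using mm k0(3) unfolding maxl_def by blast
    define f where "f = smult u k0 - monom (u * lead_coeff k0 - 1) d"
    have cf: "coeff f d = 1" unfolding f_def using k0(2) by simp
    have dfl: "degree f \<le> d" unfolding f_def
      by (rule degree_diff_le) (use k0(2) degree_smult_le[of u k0] degree_monom_le in auto)
    have dfe: "degree f = d" using dfl le_degree[of f d] cf by simp
    have f1: "lead_coeff f = 1" using dfe cf by simp
    have fK: "f \<in> K" unfolding f_def
    proof (rule ideal_diff[OF Ki])
      show "smult u k0 \<in> K" using ideal_multL[OF Ki k0(1), of "[:u:]"] by simp
      show "monom (u * lead_coeff k0 - 1) d \<in> K" using PK PA_monom[OF mi u] by blast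
    qed
    have fd: "degree f \<ge> 1"
    proof (rule ccontr)
      assume "\<not> degree f \<ge> 1"
      then have "degree f = 0" by simp
      then have "f = 1" using degree_0_id[of f] cf dfe by (simp add: one_pCons)
      then have "1 \<in> K" using fK by simp
      then obtain g q where gq: "1 = g + q" "g \<in> I" "q \<in> PA m" using KE by metis
      have "[:b:] = [:b:] * (g + q)" by (simp only: gq(1)[symmetric] mult_1_right)
      also have "\<dots> = [:b:] * g + smult b q" by (simp add: distrib_left)
      finally have "[:b:] = [:b:] * g + smult b q" .
      moreover have "[:b:] * g \<in> I" by (rule ideal_multL[OF I gq(2)])
      moreover have "smult b q \<in> I"
      proof (rule pI, rule PA_I)
        fix i show "coeff (smult b q) i \<in> p" using bm[OF PA_D[OF gq(3)]] by simp
      qed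
      ultimately have "[:b:] \<in> I" using ideal_add[OF I] by metis
      then have "b \<in> m" using contr pm by blast
      then show False using b by simp
    qed
    have "\<forall>k. k \<in> K \<longrightarrow> k \<in> NA m f"
    proof (intro allI, rule reduce_aux[OF Ki PK mi f1 fd])
      fix k assume "k \<in> K" "lead_coeff k \<notin> m"
      then have "degree k \<in> D" unfolding D_def by blast
      then have "d \<le> degree k" unfolding d_def by (rule Least_le)
      then show "degree f \<le> degree k \<and> f \<in> K" using dfe fK by simp
    qed
    then show ?thesis using f1 fd IK by blast
  qed
qed



lemma contract_ideal: assumes I: "is_ideal (I :: 'a::comm_ring_1 poly set)" shows "is_ideal (contract I)"
  unfolding is_ideal_def contract_def
proof (intro conjI ballI allI impI)
  show "0 \<in> {a. [:a:] \<in> I}" using ideal_0[OF I] by simp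
next
  fix x y assume "x \<in> {a. [:a:] \<in> I}" "y \<in> {a. [:a:] \<in> I}"
  then have "[:x:] + [:y:] \<in> I" by (intro ideal_add[OF I]) simp_all
  then show "x + y \<in> {a. [:a:] \<in> I}" by simp
next
  fix r x assume "x \<in> {a. [:a:] \<in> I}"
  then have "[:r:] * [:x:] \<in> I" by (intro ideal_multL[OF I]) simp
  then show "r * x \<in> {a. [:a:] \<in> I}" by (simp add: mult.commute)
qed

lemma easy_dir: assumes I: "is_ideal (I :: 'a::comm_ring_1 poly set)"
  shows "ideal_pow (contract I) t \<subseteq> contract (ideal_pow I t)"
proof (induction t)
  case 0 then show ?case by (simp add: contract_def)
next
  case (Suc t)
  show ?case
  proof (rule ideal_pow_Suc_sub[OF contract_ideal[OF ideal_pow_ideal]])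
    fix x y assume x: "x \<in> ideal_pow (contract I) t" and y: "y \<in> contract I"
    have "[:x:] \<in> ideal_pow I t" using Suc.IH x unfolding contract_def by auto
    moreover have "[:y:] \<in> I" using y unfolding contract_def by simp
    ultimately have "[:x:] * [:y:] \<in> ideal_pow I (Suc t)" by (rule ideal_pow_gen)
    then show "x * y \<in> contract (ideal_pow I (Suc t))" unfolding contract_def by (simp add: mult.commute)
  qed
qed

lemma PA_in: assumes I: "is_ideal (I :: 'a::comm_ring_1 poly set)" and q: "q \<in> PA (contract I)"
  shows "q \<in> I"
proof -
  have "(\<Sum>i\<le>degree q. monom (coeff q i) i) \<in> I"
  proof (rule ideal_sum[OF I], simp)
    fix i
    have "[:coeff q i:] \<in> I" using PA_D[OF q, of i] unfolding contract_def by simp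
    then have "[:coeff q i:] * monom 1 i \<in> I" by (rule ideal_multR[OF I])
    then show "monom (coeff q i) i \<in> I" by (simp add: smult_monom)
  qed
  then show ?thesis by (simp add: poly_as_sum_of_monoms)
qed

theorem theorem3p11:
  fixes I :: "'a::idom poly set"
  assumes "noetherian TYPE('a)"
    and "krull_dim TYPE('a) = 1"
    and "radical_ideal I"
  shows "power_stable I"
proof -
  note N = assms(1) and Dm = assms(2)
  have Ii: "is_ideal I" and radI: "\<And>x n. n \<ge> 1 \<Longrightarrow> x ^ n \<in> I \<Longrightarrow> x \<in> I"
    using assms(3) unfolding radical_ideal_def by auto
  define p where "p = contract I"
  have pid: "is_ideal p" unfolding p_def by (rule contract_ideal[OF Ii])
  have rp: "rad p = p"
  proof
    show "rad p \<subseteq> p"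
    proof
      fix z assume "z \<in> rad p"
      then obtain n where n: "n \<ge> 1" "z ^ n \<in> p" unfolding rad_def by blast
      then have "[:z:] ^ n \<in> I" unfolding p_def contract_def by (simp add: poly_const_pow)
      then have "[:z:] \<in> I" by (rule radI[OF n(1)])
      then show "z \<in> p" unfolding p_def contract_def by simp
    qed
    show "p \<subseteq> rad p" by (rule rad_sub)
  qed
  show ?thesis unfolding power_stable_def
  proof (intro allI impI)
    fix t :: nat assume t: "t \<ge> 1"
    show "contract (ideal_pow I t) = ideal_pow (contract I) t"
    proof
      show "ideal_pow (contract I) t \<subseteq> contract (ideal_pow I t)" by (rule easy_dir[OF Ii])
    next
      show "contract (ideal_pow I t) \<subseteq> ideal_pow (contract I) t"
      proof (cases "1 \<in> p")
        case True
        then have "p = UNIV" by (rule ideal_one[OF pid])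
        then show ?thesis unfolding p_def by (simp add: ideal_pow_UNIV)
      next
        case one: False
        show ?thesis
        proof (cases "p = {0}")
          case True
          have "contract (ideal_pow I t) \<subseteq> contract I"
            unfolding contract_def using ideal_pow_le[OF Ii t] by auto
          also have "\<dots> = {0}" using True p_def by simp
          also have "\<dots> \<subseteq> ideal_pow (contract I) t" using ideal_pow_0[OF contract_ideal[OF Ii]] by simp
          finally show ?thesis .
        next
          case nz: False
          obtain F where F: "finite F" "\<forall>P\<in>F. prime_ideal P" "rad p = \<Inter>F"
            using decomp[OF N pid] by blast
          have pF: "p = \<Inter>F" using F(3) rp by simp
          have pm: "\<And>m. m \<in> F \<Longrightarrow> p \<subseteq> m" using pF by auto
          have mx: "\<And>m. m \<in> F \<Longrightarrow> maxl m"
          proof -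
            fix m assume m: "m \<in> F"
            obtain x where x: "x \<in> p" "x \<noteq> 0" using nz ideal_0[OF pid] by blast
            have "m \<noteq> {0}" using x pm[OF m] by auto
            then show "maxl m" using dim_maxl[OF N Dm] F(2) m by blast
          qed
          show ?thesis
          proof
            fix a assume a: "a \<in> contract (ideal_pow I t)"
            have "a \<in> (\<Inter>m\<in>F. ideal_pow m t)"
            proof
              fix m assume m: "m \<in> F"
              have mm: "maxl m" by (rule mx[OF m])
              have mi: "is_ideal m" by (rule maxl_ideal[OF mm])
              have "\<exists>b. b \<notin> m \<and> (\<forall>m'\<in>F - {m}. b \<in> m')"
              proof (rule avoid)
                show "prime_ideal m" using mm unfolding maxl_def by simp
                show "finite (F - {m})" using F(1) by simp
                fix m' assume m': "m' \<in> F - {m}"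
                then have "m \<noteq> m'" by auto
                then have "\<exists>x\<in>m'. x \<notin> m" using maxl_distinct[OF mm mx[of m']] m' by simp
                then show "is_ideal m' \<and> (\<exists>x\<in>m'. x \<notin> m)" using maxl_ideal[OF mx] m' by simp
              qed
              then obtain b where b: "b \<notin> m" "\<forall>m'\<in>F - {m}. b \<in> m'" by auto
              have bm: "b * x \<in> p" if x: "x \<in> m" for x
              proof -
                have "b * x \<in> m'" if m': "m' \<in> F" for m'
                proof (cases "m' = m")
                  case True then show ?thesis using ideal_multL[OF mi x] by simp
                next
                  case False
                  then have "b \<in> m'" using b(2) m' by simp
                  then show ?thesis by (rule ideal_multR[OF maxl_ideal[OF mx[OF m']]])
                qed
                then show ?thesis unfolding pF by auto
              qed
              have pI: "\<And>q. q \<in> PA p \<Longrightarrow> q \<in> I" unfolding p_def by (rule PA_in[OF Ii])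
              have contr: "\<And>c. [:c:] \<in> I \<Longrightarrow> c \<in> p" unfolding p_def contract_def by simp
              obtain f where f: "lead_coeff f = 1" "degree f \<ge> 1" "I \<subseteq> NA m f"
                using monic_exists[OF mm Ii pI pid pm[OF m] contr b(1) bm] by blast
              have "[:a:] \<in> ideal_pow I t" using a unfolding contract_def by simp
              then have "[:a:] \<in> NA (ideal_pow m t) f" using pow_NA[OF mi f(3)] by blast
              then obtain q h where qh: "[:a:] = q + f * h" "q \<in> PA (ideal_pow m t)" by (rule NAE)
              show "a \<in> ideal_pow m t" by (rule retract[OF ideal_pow_ideal f(1) f(2) qh])
            qed
            also have "\<dots> \<subseteq> ideal_pow (\<Inter>F) t" by (rule inter_pow[OF F(1) mx])
            finally show "a \<in> ideal_pow (contract I) t" using pF p_def by simp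
          qed
        qed
      qed
    qed
  qed
qed


end
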